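(* Let $p\geq 2$ and let $a,b$ be positive integers. (i) Suppose $\mathcal{S}$ is a $p$-qubit UPB and $i\in\{1,\dots,p\}$ is a qubit on which only one orthonormal basis $\{|u\rangle,|u^\perp\rangle\}$ of $\mathbb{C}^2$ is used, i.e. the $i$-th tensor factor of every element of $\mathcal{S}$ is a scalar multiple of $|u\rangle$ or of $|u^\perp\rangle$, with exactly $a$ elements of the first kind and $b$ of the second (so the orthogonality graph of qubit $i$ is the complete bipartite graph $K_{a,b}$). Then the set obtained from the $a$ elements of the first kind by deleting their $i$-th tensor factor is a $(p-1)$-qubit UPB of size $a$, and likewise the $b$ elements of the second kind give a $(p-1)$-qubit UPB of size $b$. (ii) Conversely, if there exist $(p-1)$-qubit UPBs of sizes $a$ and $b$, then there exists a $p$-qubit UPB of size $a+b$ in which only one orthonormal basis of $\mathbb{C}^2$ is used on some qubit, with $a$ states having one basis vector and $b$ states having the other on that qubit.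
   Context: A product state in $(\mathbb{C}^2)^{\otimes p}$ is a vector $|v_1\rangle\otimes\cdots\otimes|v_p\rangle$ with each $|v_j\rangle\in\mathbb{C}^2$. A $p$-qubit unextendible product basis (UPB) is a finite set $\mathcal{S}\subseteq(\mathbb{C}^2)^{\otimes p}$ of unit product vectors that are pairwise orthogonal, such that no nonzero product vector outside $\mathcal{S}$ is orthogonal to every element of $\mathcal{S}$. The orthogonality graph of qubit $\ell$ for a set of product states is the graph whose vertices are the states, with an edge between two states iff their $\ell$-th tensor factors are orthogonal. *)

theory Defs
  imports Complex_Main
begin

(* A qubit vector in C^2, coordinates indexed by False (=|0>) and True (=|1>). *)
type_synonym qubit = "bool \<Rightarrow> complex"

(* A vector of the p-qubit space (C^2)^{\<otimes> p}: coordinates indexed by bit strings of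
   length p (product vectors built by tensor vanish at all other indices). *)
type_synonym qvec = "bool list \<Rightarrow> complex"

definition qinner :: "qubit \<Rightarrow> qubit \<Rightarrow> complex" where
  "qinner u v = cnj (u False) * v False + cnj (u True) * v True"

definition inner_p :: "nat \<Rightarrow> qvec \<Rightarrow> qvec \<Rightarrow> complex" where
  "inner_p p x y = (\<Sum>bs\<in>{bs::bool list. length bs = p}. cnj (x bs) * y bs)"

definition tensor :: "qubit list \<Rightarrow> qvec" where
  "tensor vs = (\<lambda>bs. if length bs = length vs
                      then (\<Prod>j<length vs. (vs ! j) (bs ! j)) else 0)"

definition is_product :: "nat \<Rightarrow> qvec \<Rightarrow> bool" where
  "is_product p x \<longleftrightarrow> (\<exists>vs. length vs = p \<and> x = tensor vs)"

definition is_UPB :: "nat \<Rightarrow> qvec set \<Rightarrow> bool" where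
  "is_UPB p S \<longleftrightarrow>
     finite S \<and>
     (\<forall>x\<in>S. is_product p x \<and> inner_p p x x = 1) \<and>
     (\<forall>x\<in>S. \<forall>y\<in>S. x \<noteq> y \<longrightarrow> inner_p p x y = 0) \<and>
     \<not> (\<exists>y. is_product p y \<and> y \<noteq> (\<lambda>_. 0) \<and> y \<notin> S \<and> (\<forall>x\<in>S. inner_p p x y = 0))"

definition orthonormal_basis2 :: "qubit \<Rightarrow> qubit \<Rightarrow> bool" where
  "orthonormal_basis2 u w \<longleftrightarrow> qinner u u = 1 \<and> qinner w w = 1 \<and> qinner u w = 0"

(* elements of S whose i-th tensor factor (0-based) is a scalar multiple of u *)
definition factor_kind :: "nat \<Rightarrow> nat \<Rightarrow> qubit \<Rightarrow> qvec set \<Rightarrow> qvec set" where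
  "factor_kind p i u S =
     {x\<in>S. \<exists>vs c. length vs = p \<and> x = tensor vs \<and> vs ! i = (\<lambda>t. c * u t)}"

definition delete_factor :: "nat \<Rightarrow> nat \<Rightarrow> qubit \<Rightarrow> qvec set \<Rightarrow> qvec set" where
  "delete_factor p i u S =
     {tensor (take i vs @ drop (Suc i) vs) | vs.
        length vs = p \<and> vs ! i = u \<and> tensor vs \<in> S}"

end

theory Submission
  imports Defs
begin


definition del :: "nat \<Rightarrow> 'a list \<Rightarrow> 'a list" where
  "del i xs = take i xs @ drop (Suc i) xs"
definition insl :: "nat \<Rightarrow> 'a \<Rightarrow> 'a list \<Rightarrow> 'a list" where
  "insl i v xs = take i xs @ v # drop i xs"
definition ipr :: "qubit list \<Rightarrow> qubit list \<Rightarrow> complex" where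
  "ipr vs ws = (\<Prod>j<length vs. qinner (vs!j) (ws!j))"

lemma length_del[simp]: "i < length xs \<Longrightarrow> length (del i xs) = length xs - 1"
  by (simp add: del_def)
lemma length_insl[simp]: "i \<le> length xs \<Longrightarrow> length (insl i v xs) = Suc (length xs)"
  by (simp add: insl_def)
lemma del_insl[simp]: "i \<le> length xs \<Longrightarrow> del i (insl i v xs) = xs"
  by (simp add: del_def insl_def)
lemma nth_insl[simp]: "i \<le> length xs \<Longrightarrow> insl i v xs ! i = v"
  by (simp add: insl_def nth_append)
lemma insl_del: "i < length xs \<Longrightarrow> insl i (xs!i) (del i xs) = xs"
  by (simp add: del_def insl_def id_take_nth_drop[symmetric])
lemma nth_del: "i < length xs \<Longrightarrow> j < length xs - 1 \<Longrightarrow>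
   del i xs ! j = xs ! (if j < i then j else Suc j)"
  by (auto simp: del_def nth_append min_def)

lemma prod_reindex_del:
  fixes f :: "nat \<Rightarrow> 'b::comm_monoid_mult"
  assumes "i < n"
  shows "(\<Prod>j<n. f j) = f i * (\<Prod>j<n-1. f (if j < i then j else Suc j))"
proof -
  have "(\<Prod>j<n. f j) = f i * (\<Prod>j\<in>{..<n}-{i}. f j)"
    using assms by (simp add: prod.remove)
  moreover have "(\<Prod>j\<in>{..<n}-{i}. f j) = (\<Prod>j<n-1. f (if j < i then j else Suc j))"
  proof (rule prod.reindex_bij_betw[symmetric, where h="\<lambda>j. if j < i then j else Suc j"])
    show "bij_betw (\<lambda>j. if j < i then j else Suc j) {..<n - 1} ({..<n} - {i})"
      unfolding bij_betw_def
    proof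
      show "inj_on (\<lambda>j. if j < i then j else Suc j) {..<n - 1}"
        by (auto simp: inj_on_def split: if_splits)
      show "(\<lambda>j. if j < i then j else Suc j) ` {..<n - 1} = {..<n} - {i}"
      proof
        show "(\<lambda>j. if j < i then j else Suc j) ` {..<n - 1} \<subseteq> {..<n} - {i}"
          using assms by auto
        show "{..<n} - {i} \<subseteq> (\<lambda>j. if j < i then j else Suc j) ` {..<n - 1}"
        proof
          fix k assume k: "k \<in> {..<n} - {i}"
          show "k \<in> (\<lambda>j. if j < i then j else Suc j) ` {..<n - 1}"
          proof (cases "k < i")
            case True then show ?thesis using k assms by (auto intro!: image_eqI[where x=k])
          next
            case False then show ?thesis using k assms
              by (auto intro!: image_eqI[where x="k - 1"])
          qed
        qed
      qed
    qed
  qed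
  ultimately show ?thesis by simp
qed

lemma tensor_del:
  assumes "length bs = length vs" "i < length vs"
  shows "tensor vs bs = (vs!i) (bs!i) * tensor (del i vs) (del i bs)"
proof -
  have "tensor vs bs = (\<Prod>j<length vs. (vs ! j) (bs ! j))" using assms by (simp add: tensor_def)
  also have "\<dots> = (vs!i) (bs!i) * (\<Prod>j<length vs - 1. (vs ! (if j < i then j else Suc j)) (bs ! (if j < i then j else Suc j)))"
    by (rule prod_reindex_del[OF assms(2)])
  also have "(\<Prod>j<length vs - 1. (vs ! (if j < i then j else Suc j)) (bs ! (if j < i then j else Suc j)))
     = tensor (del i vs) (del i bs)"
    using assms by (auto simp: tensor_def nth_del intro!: prod.cong)
  finally show ?thesis .
qed

lemma ipr_del:
  assumes "length ws = length vs" "i < length vs"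
  shows "ipr vs ws = qinner (vs!i) (ws!i) * ipr (del i vs) (del i ws)"
proof -
  have "ipr vs ws = qinner (vs!i) (ws!i) * (\<Prod>j<length vs - 1. qinner (vs ! (if j < i then j else Suc j)) (ws ! (if j < i then j else Suc j)))"
    unfolding ipr_def by (rule prod_reindex_del[OF assms(2)])
  also have "(\<Prod>j<length vs - 1. qinner (vs ! (if j < i then j else Suc j)) (ws ! (if j < i then j else Suc j)))
     = ipr (del i vs) (del i ws)"
    using assms by (auto simp: ipr_def nth_del intro!: prod.cong)
  finally show ?thesis .
qed

lemma ipr_insl:
  assumes "length ys = length rs" "i \<le> length rs"
  shows "ipr (insl i u rs) (insl i v ys) = qinner u v * ipr rs ys"
  using ipr_del[of "insl i v ys" "insl i u rs" i] assms by simp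

lemma tensor_Cons_Cons: "tensor (v#vs) (b#bs) = v b * tensor vs bs"
  by (simp add: tensor_def prod.lessThan_Suc_shift del: prod.lessThan_Suc)
lemma tensor_Cons_Nil: "tensor (v#vs) [] = 0"
  by (simp add: tensor_def)
lemma tensor_len: "length bs \<noteq> length vs \<Longrightarrow> tensor vs bs = 0"
  by (simp add: tensor_def)

lemma sum_lists_Suc:
  "(\<Sum>bs\<in>{bs::bool list. length bs = Suc n}. f bs) = (\<Sum>b\<in>UNIV. \<Sum>bs\<in>{bs. length bs = n}. f (b#bs))"
proof -
  have eq: "{bs::bool list. length bs = Suc n} = (\<lambda>(b,bs). b#bs) ` (UNIV \<times> {bs. length bs = n})"
    by (auto simp: length_Suc_conv image_iff)
  have inj: "inj_on (\<lambda>(b::bool,bs). b#bs) (UNIV \<times> {bs. length bs = n})"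
    by (auto simp: inj_on_def)
  have fin: "finite {bs::bool list. length bs = n}"
    using finite_lists_length_eq[of "UNIV::bool set" n] by simp
  show ?thesis
    unfolding eq sum.reindex[OF inj]
    by (simp add: sum.cartesian_product fin split_def)
qed

lemma inner_Cons:
  assumes "length vs = n" "length ws = n"
  shows "inner_p (Suc n) (tensor (v#vs)) (tensor (w#ws)) = qinner v w * inner_p n (tensor vs) (tensor ws)"
  unfolding inner_p_def sum_lists_Suc tensor_Cons_Cons
  by (simp add: qinner_def UNIV_bool sum_distrib_left sum_distrib_right distrib_right distrib_left mult_ac sum.distrib)

lemma inner_tensor:
  "length vs = n \<Longrightarrow> length ws = n \<Longrightarrow> inner_p n (tensor vs) (tensor ws) = ipr vs ws"
proof (induction n arbitrary: vs ws)
  case 0 then show ?case by (simp add: inner_p_def tensor_def ipr_def)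
next
  case (Suc n)
  then obtain v vs' w ws' where v: "vs = v#vs'" "ws = w#ws'" by (metis length_Suc_conv)
  with Suc show ?case
    by (simp add: inner_Cons ipr_def prod.lessThan_Suc_shift del: prod.lessThan_Suc)
qed



definition Hf :: "nat \<Rightarrow> nat \<Rightarrow> qubit \<Rightarrow> qvec \<Rightarrow> qvec" where
  "Hf n i u r = (\<lambda>bs. if length bs = n then u (bs!i) * r (del i bs) else 0)"

lemma L_H:
  assumes "length rs = n - 1" "i < n"
  shows "tensor (insl i u rs) = Hf n i u (tensor rs)"
proof
  fix bs
  have li: "length (insl i u rs) = n" using assms by simp
  show "tensor (insl i u rs) bs = Hf n i u (tensor rs) bs"
  proof (cases "length bs = n")
    case True
    then show ?thesis using tensor_del[of bs "insl i u rs" i] assms li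
      by (simp add: Hf_def)
  next
    case False then show ?thesis using li by (simp add: Hf_def tensor_len)
  qed
qed

lemma L_eval:
  assumes "length cs = n - 1" "i < n"
  shows "Hf n i u r (insl i b cs) = u b * r cs"
  using assms by (simp add: Hf_def)

lemma u_nz: "qinner u u = 1 \<Longrightarrow> \<exists>b. u b \<noteq> 0"
proof (rule ccontr)
  assume "qinner u u = 1" "\<not> (\<exists>b. u b \<noteq> 0)"
  then show False by (simp add: qinner_def)
qed

lemma K2:
  assumes "length rs = n - 1" "length rs' = n - 1" "i < n" "u b \<noteq> 0"
    and "Hf n i u (tensor rs) = Hf n i u (tensor rs')"
  shows "tensor rs = tensor rs'"
proof
  fix cs
  show "tensor rs cs = tensor rs' cs"
  proof (cases "length cs = n - 1")
    case True
    have e1: "Hf n i u (tensor rs) (insl i b cs) = u b * tensor rs cs"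
      by (rule L_eval[OF True assms(3)])
    have e2: "Hf n i u (tensor rs') (insl i b cs) = u b * tensor rs' cs"
      by (rule L_eval[OF True assms(3)])
    have "u b * tensor rs cs = u b * tensor rs' cs"
      using e1 e2 assms(5) by metis
    then show ?thesis using assms(4) by simp
  next
    case False then show ?thesis using assms by (simp add: tensor_len)
  qed
qed

lemma D_alt:
  assumes "i < p"
  shows "delete_factor p i u S = {tensor rs | rs. length rs = p - 1 \<and> tensor (insl i u rs) \<in> S}"
proof
  show "delete_factor p i u S \<subseteq> {tensor rs | rs. length rs = p - 1 \<and> tensor (insl i u rs) \<in> S}"
  proof
    fix r assume "r \<in> delete_factor p i u S"
    then obtain vs where vs: "r = tensor (take i vs @ drop (Suc i) vs)" "length vs = p" "vs ! i = u" "tensor vs \<in> S"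
      by (auto simp: delete_factor_def)
    have "insl i u (del i vs) = vs" using insl_del[of i vs] vs assms by simp
    moreover have "r = tensor (del i vs)" using vs(1) by (simp add: del_def)
    moreover have "length (del i vs) = p - 1" using vs assms by simp
    ultimately have "r = tensor (del i vs) \<and> length (del i vs) = p - 1 \<and> tensor (insl i u (del i vs)) \<in> S"
      using vs(4) by simp
    then show "r \<in> {tensor rs | rs. length rs = p - 1 \<and> tensor (insl i u rs) \<in> S}"
      by blast
  qed
next
  show "{tensor rs | rs. length rs = p - 1 \<and> tensor (insl i u rs) \<in> S} \<subseteq> delete_factor p i u S"
  proof
    fix r assume "r \<in> {tensor rs | rs. length rs = p - 1 \<and> tensor (insl i u rs) \<in> S}"
    then obtain rs where rs: "r = tensor rs" "length rs = p - 1" "tensor (insl i u rs) \<in> S" by auto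
    have "i \<le> length rs" using rs assms by simp
    then have "del i (insl i u rs) = rs" "length (insl i u rs) = p" "insl i u rs ! i = u"
      using rs assms by auto
    then have "r = tensor (take i (insl i u rs) @ drop (Suc i) (insl i u rs))"
      using rs(1) by (simp add: del_def)
    then show "r \<in> delete_factor p i u S" unfolding delete_factor_def
      using rs \<open>length (insl i u rs) = p\<close> \<open>insl i u rs ! i = u\<close> by blast
  qed
qed

lemma scale:
  assumes "j < length ws"
  shows "tensor (ws[j := (\<lambda>t. c * (ws!j) t)]) bs = c * tensor ws bs"
proof (cases "length bs = length ws")
  case True
  have d: "del j (ws[j := (\<lambda>t. c * (ws!j) t)]) = del j ws"
    by (simp add: del_def)
  show ?thesis
    using tensor_del[of bs "ws[j := (\<lambda>t. c * (ws!j) t)]" j] tensor_del[of bs ws j] True assms d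
    by simp
next
  case False then show ?thesis by (simp add: tensor_len)
qed

lemma tensor_insl:
  assumes "length bs = Suc (length rs)" "i \<le> length rs"
  shows "tensor (insl i u rs) bs = u (bs!i) * tensor rs (del i bs)"
proof -
  have "tensor (insl i u rs) bs = (insl i u rs ! i) (bs!i) * tensor (del i (insl i u rs)) (del i bs)"
    by (rule tensor_del) (use assms in simp_all)
  then show ?thesis using assms by simp
qed

lemma K1:
  assumes "x \<in> factor_kind p i u S" "i < p" "p \<ge> 2"
  shows "\<exists>rs. length rs = p - 1 \<and> x = tensor (insl i u rs)"
proof -
  obtain vs c where vs: "length vs = p" "x = tensor vs" "vs ! i = (\<lambda>t. c * u t)"
    using assms(1) by (auto simp: factor_kind_def)
  define ws where "ws = del i vs"
  have lws: "length ws = p - 1" using vs assms by (simp add: ws_def)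
  define rs where "rs = ws[0 := (\<lambda>t. c * (ws!0) t)]"
  have lrs: "length rs = p - 1" using lws by (simp add: rs_def)
  have "tensor (insl i u rs) = tensor vs"
  proof
    fix bs
    show "tensor (insl i u rs) bs = tensor vs bs"
    proof (cases "length bs = p")
      case True
      have a: "tensor (insl i u rs) bs = u (bs!i) * tensor rs (del i bs)"
        by (rule tensor_insl) (use True lrs assms in simp_all)
      have b: "tensor rs (del i bs) = c * tensor ws (del i bs)"
        unfolding rs_def by (rule scale) (use lws assms in simp)
      have c0: "tensor vs bs = (vs!i) (bs!i) * tensor ws (del i bs)"
        unfolding ws_def by (rule tensor_del) (use True vs(1) assms in simp_all)
      have c: "tensor vs bs = c * u (bs!i) * tensor ws (del i bs)"
        using c0 vs(3) by simp
      show ?thesis unfolding a b c by (simp only: mult_ac)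
    next
      case False
      have "length (insl i u rs) = p" using lrs assms by simp
      then show ?thesis using False vs(1) tensor_len[of bs "insl i u rs"] tensor_len[of bs vs] by simp
    qed
  qed
  then show ?thesis using lrs vs(2) by metis
qed



lemma qinner_conj: "qinner w u = cnj (qinner u w)"
  by (simp add: qinner_def mult.commute)

lemma qinner_scale: "qinner (\<lambda>t. c * w t) u = cnj c * qinner w u"
  by (simp add: qinner_def algebra_simps)

lemma side:
  assumes UPB: "is_UPB p S" and ip: "i < p" and p2: "p \<ge> 2" and ob: "orthonormal_basis2 u w"
    and SU: "S = factor_kind p i u S \<union> factor_kind p i w S"
  shows "is_UPB (p-1) (delete_factor p i u S) \<and> card (delete_factor p i u S) = card (factor_kind p i u S)"
proof -
  let ?Su = "factor_kind p i u S" and ?Sw = "factor_kind p i w S" and ?D = "delete_factor p i u S"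
  have uu: "qinner u u = 1" and uw: "qinner u w = 0" using ob by (auto simp: orthonormal_basis2_def)
  have wu: "qinner w u = 0"
  proof -
    have "qinner w u = cnj (qinner u w)" by (rule qinner_conj)
    also have "\<dots> = 0" using uw by simp
    finally show ?thesis .
  qed
  obtain b0 where b0: "u b0 \<noteq> 0" using u_nz[OF uu] by blast
  have Dalt: "?D = {tensor rs | rs. length rs = p - 1 \<and> tensor (insl i u rs) \<in> S}"
    by (rule D_alt[OF ip])
  have finS: "finite S" using UPB unfolding is_UPB_def by blast
  have norm: "\<And>x. x \<in> S \<Longrightarrow> inner_p p x x = 1" using UPB unfolding is_UPB_def by blast
  have orth: "\<And>x y. x \<in> S \<Longrightarrow> y \<in> S \<Longrightarrow> x \<noteq> y \<Longrightarrow> inner_p p x y = 0"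
    using UPB unfolding is_UPB_def by blast
  have ext: "\<And>y. is_product p y \<Longrightarrow> y \<noteq> (\<lambda>_. 0) \<Longrightarrow> y \<notin> S \<Longrightarrow> \<not> (\<forall>x\<in>S. inner_p p x y = 0)"
    using UPB unfolding is_UPB_def by blast
  have ili: "\<And>rs. length rs = p - 1 \<Longrightarrow> i \<le> length rs" using ip by simp
  have lins: "\<And>rs. length rs = p - 1 \<Longrightarrow> length (insl i u rs) = p" using ip by simp
  have inner_ins: "\<And>rs ys. length rs = p - 1 \<Longrightarrow> length ys = p - 1 \<Longrightarrow>
      inner_p p (tensor (insl i u rs)) (tensor (insl i u ys)) = inner_p (p-1) (tensor rs) (tensor ys)"
  proof -
    fix rs ys :: "qubit list" assume l: "length rs = p - 1" "length ys = p - 1"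
    have "inner_p p (tensor (insl i u rs)) (tensor (insl i u ys)) = ipr (insl i u rs) (insl i u ys)"
      by (rule inner_tensor) (use lins l in auto)
    also have "\<dots> = ipr rs ys" using ipr_insl[of ys rs i u u] l ili[OF l(1)] uu by simp
    also have "\<dots> = inner_p (p-1) (tensor rs) (tensor ys)"
      by (rule inner_tensor[symmetric]) (use l in auto)
    finally show "inner_p p (tensor (insl i u rs)) (tensor (insl i u ys)) = inner_p (p-1) (tensor rs) (tensor ys)" .
  qed
  have inj2: "\<And>rs ys. length rs = p - 1 \<Longrightarrow> length ys = p - 1 \<Longrightarrow>
      tensor (insl i u rs) = tensor (insl i u ys) \<Longrightarrow> tensor rs = tensor ys"
  proof -
    fix rs ys :: "qubit list" assume l: "length rs = p - 1" "length ys = p - 1"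
      and e: "tensor (insl i u rs) = tensor (insl i u ys)"
    show "tensor rs = tensor ys"
      by (rule K2[where n=p and u=u and b=b0, OF l ip b0]) (use e L_H[OF l(1) ip, of u] L_H[OF l(2) ip, of u] in simp)
  qed
  define H where "H = Hf p i u"
  have HD: "?Su = H ` ?D"
  proof
    show "?Su \<subseteq> H ` ?D"
    proof
      fix x assume x: "x \<in> ?Su"
      then obtain rs where rs: "length rs = p - 1" "x = tensor (insl i u rs)"
        using K1[OF x ip p2] by blast
      have "x \<in> S" using x by (simp add: factor_kind_def)
      then have "tensor rs \<in> ?D" unfolding Dalt using rs by blast
      moreover have "x = H (tensor rs)" using rs L_H[OF rs(1) ip, of u] by (simp add: H_def)
      ultimately show "x \<in> H ` ?D" by blast
    qed
  next
    show "H ` ?D \<subseteq> ?Su"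
    proof
      fix x assume "x \<in> H ` ?D"
      then obtain rs where rs: "length rs = p - 1" "tensor (insl i u rs) \<in> S" "x = H (tensor rs)"
        unfolding Dalt by blast
      have x: "x = tensor (insl i u rs)" using rs L_H[OF rs(1) ip, of u] by (simp add: H_def)
      have "insl i u rs ! i = (\<lambda>t. 1 * u t)" using ili[OF rs(1)] by simp
      then show "x \<in> ?Su" unfolding factor_kind_def using x rs lins[OF rs(1)] by blast
    qed
  qed
  have injH: "inj_on H ?D"
  proof
    fix r r' assume "r \<in> ?D" "r' \<in> ?D" and e: "H r = H r'"
    then obtain rs rs' where rs: "length rs = p - 1" "r = tensor rs" and rs': "length rs' = p - 1" "r' = tensor rs'"
      unfolding Dalt by blast
    show "r = r'" using K2[where n=p and u=u and b=b0, OF rs(1) rs'(1) ip b0] e rs rs' by (simp add: H_def)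
  qed
  have card: "card ?D = card ?Su" using HD card_image[OF injH] by simp
  have finSu: "finite ?Su" using finS by (simp add: factor_kind_def)
  have finD: "finite ?D" using HD finSu finite_image_iff[OF injH] by simp
  have prodD: "\<And>r. r \<in> ?D \<Longrightarrow> is_product (p-1) r \<and> inner_p (p-1) r r = 1"
  proof -
    fix r assume "r \<in> ?D"
    then obtain rs where rs: "length rs = p - 1" "r = tensor rs" "tensor (insl i u rs) \<in> S"
      unfolding Dalt by blast
    have "inner_p (p-1) r r = 1" using inner_ins[OF rs(1) rs(1)] norm[OF rs(3)] rs(2) by simp
    then show "is_product (p-1) r \<and> inner_p (p-1) r r = 1" using rs by (auto simp: is_product_def)
  qed
  have orthD: "\<And>r r'. r \<in> ?D \<Longrightarrow> r' \<in> ?D \<Longrightarrow> r \<noteq> r' \<Longrightarrow> inner_p (p-1) r r' = 0"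
  proof -
    fix r r' assume "r \<in> ?D" "r' \<in> ?D" "r \<noteq> r'"
    then obtain rs rs' where rs: "length rs = p - 1" "r = tensor rs" "tensor (insl i u rs) \<in> S"
      and rs': "length rs' = p - 1" "r' = tensor rs'" "tensor (insl i u rs') \<in> S"
      unfolding Dalt by blast
    have "tensor (insl i u rs) \<noteq> tensor (insl i u rs')"
      using inj2[OF rs(1) rs'(1)] rs(2) rs'(2) \<open>r \<noteq> r'\<close> by blast
    then show "inner_p (p-1) r r' = 0"
      using orth[OF rs(3) rs'(3)] inner_ins[OF rs(1) rs'(1)] rs(2) rs'(2) by simp
  qed
  have extD: "\<not> (\<exists>y. is_product (p-1) y \<and> y \<noteq> (\<lambda>_. 0) \<and> y \<notin> ?D \<and> (\<forall>x\<in>?D. inner_p (p-1) x y = 0))"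
  proof
    assume "\<exists>y. is_product (p-1) y \<and> y \<noteq> (\<lambda>_. 0) \<and> y \<notin> ?D \<and> (\<forall>x\<in>?D. inner_p (p-1) x y = 0)"
    then obtain ys where ys: "length ys = p - 1" "tensor ys \<noteq> (\<lambda>_. 0)" "tensor ys \<notin> ?D"
      and yo: "\<forall>x\<in>?D. inner_p (p-1) x (tensor ys) = 0"
      unfolding is_product_def by blast
    define z where "z = tensor (insl i u ys)"
    have pz: "is_product p z" unfolding is_product_def z_def using lins[OF ys(1)] by blast
    have nz: "z \<noteq> (\<lambda>_. 0)"
    proof
      assume z0: "z = (\<lambda>_. 0)"
      obtain cs where cs: "tensor ys cs \<noteq> 0" using ys(2) by blast
      have lcs: "length cs = p - 1"
      proof (rule ccontr)
        assume "length cs \<noteq> p - 1"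
        then have "tensor ys cs = 0" using tensor_len[of cs ys] ys(1) by simp
        then show False using cs by simp
      qed
      have "z (insl i b0 cs) = u b0 * tensor ys cs"
        unfolding z_def L_H[OF ys(1) ip] by (rule L_eval[OF lcs ip])
      then show False using z0 b0 cs by simp
    qed
    have zS: "z \<notin> S"
    proof
      assume "z \<in> S"
      then have "tensor ys \<in> ?D" unfolding Dalt z_def using ys(1) by blast
      then show False using ys(3) by blast
    qed
    have zo: "\<forall>x\<in>S. inner_p p x z = 0"
    proof
      fix x assume xS: "x \<in> S"
      show "inner_p p x z = 0"
      proof (cases "x \<in> ?Su")
        case True
        then obtain rs where rs: "length rs = p - 1" "x = tensor (insl i u rs)"
          using K1[OF True ip p2] by blast
        have "tensor rs \<in> ?D" unfolding Dalt using rs xS by blast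
        then show ?thesis using yo inner_ins[OF rs(1) ys(1)] rs(2) by (simp add: z_def)
      next
        case False
        then have "x \<in> ?Sw" using xS SU by blast
        then obtain xs c where xs: "length xs = p" "x = tensor xs" "xs ! i = (\<lambda>t. c * w t)"
          by (auto simp: factor_kind_def)
        have "inner_p p x z = ipr xs (insl i u ys)"
          unfolding xs(2) z_def by (rule inner_tensor) (use xs(1) lins[OF ys(1)] in auto)
        also have "\<dots> = qinner (xs!i) (insl i u ys ! i) * ipr (del i xs) (del i (insl i u ys))"
          by (rule ipr_del) (use xs(1) lins[OF ys(1)] ip in auto)
        also have "qinner (xs!i) (insl i u ys ! i) = 0"
          using xs(3) ili[OF ys(1)] qinner_scale[of c w u] wu by simp
        finally show ?thesis by simp
      qed
    qed
    show False using ext[OF pz nz zS] zo by blast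
  qed
  have "is_UPB (p-1) ?D" unfolding is_UPB_def
  proof (intro conjI)
    show "finite ?D" by (rule finD)
    show "\<forall>x\<in>?D. is_product (p - 1) x \<and> inner_p (p - 1) x x = 1" using prodD by blast
    show "\<forall>x\<in>?D. \<forall>y\<in>?D. x \<noteq> y \<longrightarrow> inner_p (p - 1) x y = 0" using orthD by blast
  qed (rule extD)
  then show ?thesis using card by blast
qed



definition G :: "qubit \<Rightarrow> qvec \<Rightarrow> qvec" where
  "G v x = (\<lambda>bs. case bs of [] \<Rightarrow> 0 | b#cs \<Rightarrow> v b * x cs)"

definition e0 :: qubit where "e0 = (\<lambda>b. if b then 0 else 1)"
definition e1 :: qubit where "e1 = (\<lambda>b. if b then 1 else 0)"

lemma G_tensor: "G v (tensor rs) = tensor (v#rs)"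
proof
  fix bs show "G v (tensor rs) bs = tensor (v#rs) bs"
    by (cases bs) (simp_all add: G_def tensor_Cons_Nil tensor_Cons_Cons)
qed

lemma G_app: "G v x (b#cs) = v b * x cs" by (simp add: G_def)

lemma G_inj: assumes "v b \<noteq> 0" "G v x = G v y" shows "x = y"
proof
  fix cs
  have "v b * x cs = v b * y cs" using fun_cong[OF assms(2), of "b#cs"] by (simp add: G_app)
  then show "x cs = y cs" using assms(1) by simp
qed

lemma inner_zero: "inner_p n (\<lambda>_. 0) (\<lambda>_. 0) = 0" by (simp add: inner_p_def)

lemma upb_elem: "is_UPB n A \<Longrightarrow> x \<in> A \<Longrightarrow> \<exists>rs. length rs = n \<and> x = tensor rs"
  unfolding is_UPB_def is_product_def by blast

lemma upb_norm: "is_UPB n A \<Longrightarrow> x \<in> A \<Longrightarrow> inner_p n x x = 1"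
  unfolding is_UPB_def by blast

lemma upb_nz: "is_UPB n A \<Longrightarrow> x \<in> A \<Longrightarrow> x \<noteq> (\<lambda>_. 0)"
  using upb_norm inner_zero by fastforce

lemma inner_G:
  assumes "length rs = n" "length ys = n"
  shows "inner_p (Suc n) (G v (tensor rs)) (G w (tensor ys)) = qinner v w * inner_p n (tensor rs) (tensor ys)"
  unfolding G_tensor by (rule inner_Cons[OF assms])

lemma fk_excl:
  assumes "G v y = tensor vs" "length vs = p" "p \<ge> 1" "vs!0 = (\<lambda>t. c * u t)" "u b = 0" "v b \<noteq> 0"
  shows "y = (\<lambda>_. 0)"
proof
  fix cs
  obtain v' vs' where vs: "vs = v' # vs'" using assms(2,3) by (cases vs) auto
  have "v b * y cs = tensor vs (b#cs)" using fun_cong[OF assms(1), of "b#cs"] by (simp add: G_app)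
  also have "\<dots> = 0" using assms(4,5) vs by (simp add: tensor_Cons_Cons)
  finally show "y cs = 0" using assms(6) by simp
qed

lemma qi00: "qinner e0 e0 = 1" and qi11: "qinner e1 e1 = 1" and qi01: "qinner e0 e1 = 0"
  and qi10: "qinner e1 e0 = 0"
  by (simp_all add: qinner_def e0_def e1_def)
lemma qi0v: "qinner e0 v = v False" and qi1v: "qinner e1 v = v True"
  by (simp_all add: qinner_def e0_def e1_def)

lemma part2:
  assumes A: "is_UPB (p-1) A" and B: "is_UPB (p-1) B" and p2: "p \<ge> 2"
  shows "\<exists>S i u w. is_UPB p S \<and> card S = card A + card B \<and> i < p \<and> orthonormal_basis2 u w \<and>
            S = factor_kind p i u S \<union> factor_kind p i w S \<and>
            card (factor_kind p i u S) = card A \<and> card (factor_kind p i w S) = card B"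
proof -
  define n where "n = p - 1"
  have pn: "p = Suc n" using p2 by (simp add: n_def)
  have An: "is_UPB n A" and Bn: "is_UPB n B" using A B by (simp_all add: n_def)
  define S where "S = G e0 ` A \<union> G e1 ` B"
  have finA: "finite A" and finB: "finite B" using An Bn by (simp_all add: is_UPB_def)
  have injA: "inj_on (G e0) A" by (rule inj_onI, rule G_inj[of e0 False]) (simp_all add: e0_def)
  have injB: "inj_on (G e1) B" by (rule inj_onI, rule G_inj[of e1 True]) (simp_all add: e1_def)
  have disj: "G e0 ` A \<inter> G e1 ` B = {}"
  proof (rule ccontr)
    assume "G e0 ` A \<inter> G e1 ` B \<noteq> {}"
    then obtain a b where ab: "a \<in> A" "b \<in> B" "G e0 a = G e1 b" by blast
    have "b = (\<lambda>_. 0)"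
    proof
      fix cs show "b cs = 0" using fun_cong[OF ab(3), of "True#cs"] by (simp add: G_app e0_def e1_def)
    qed
    then show False using upb_nz[OF Bn ab(2)] by blast
  qed
  have cardS: "card S = card A + card B"
    unfolding S_def using card_Un_disjoint[OF finite_imageI[OF finA] finite_imageI[OF finB] disj]
      card_image[OF injA] card_image[OF injB] by simp
  have fk0: "factor_kind p 0 e0 S = G e0 ` A"
  proof
    show "factor_kind p 0 e0 S \<subseteq> G e0 ` A"
    proof
      fix x assume x: "x \<in> factor_kind p 0 e0 S"
      then obtain vs c where vs: "x \<in> S" "length vs = p" "x = tensor vs" "vs ! 0 = (\<lambda>t. c * e0 t)"
        by (auto simp: factor_kind_def)
      show "x \<in> G e0 ` A"
      proof (rule ccontr)
        assume "x \<notin> G e0 ` A"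
        then obtain y where y: "y \<in> B" "x = G e1 y" using vs(1) by (auto simp: S_def)
        have "y = (\<lambda>_. 0)"
          by (rule fk_excl[of e1 y vs p c e0 True]) (use y vs p2 in \<open>simp_all add: e0_def e1_def\<close>)
        then show False using upb_nz[OF Bn y(1)] by blast
      qed
    qed
  next
    show "G e0 ` A \<subseteq> factor_kind p 0 e0 S"
    proof
      fix x assume x: "x \<in> G e0 ` A"
      then obtain a where a: "a \<in> A" "x = G e0 a" by blast
      obtain rs where rs: "length rs = n" "a = tensor rs" using upb_elem[OF An a(1)] by blast
      have "x = tensor (e0#rs)" using a rs G_tensor by simp
      moreover have "length (e0#rs) = p" "(e0#rs)!0 = (\<lambda>t. 1 * e0 t)" using rs pn by simp_all
      moreover have "x \<in> S" using x by (simp add: S_def)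
      ultimately show "x \<in> factor_kind p 0 e0 S" unfolding factor_kind_def by blast
    qed
  qed
  have fk1: "factor_kind p 0 e1 S = G e1 ` B"
  proof
    show "factor_kind p 0 e1 S \<subseteq> G e1 ` B"
    proof
      fix x assume x: "x \<in> factor_kind p 0 e1 S"
      then obtain vs c where vs: "x \<in> S" "length vs = p" "x = tensor vs" "vs ! 0 = (\<lambda>t. c * e1 t)"
        by (auto simp: factor_kind_def)
      show "x \<in> G e1 ` B"
      proof (rule ccontr)
        assume "x \<notin> G e1 ` B"
        then obtain y where y: "y \<in> A" "x = G e0 y" using vs(1) by (auto simp: S_def)
        have "y = (\<lambda>_. 0)"
          by (rule fk_excl[of e0 y vs p c e1 False]) (use y vs p2 in \<open>simp_all add: e0_def e1_def\<close>)
        then show False using upb_nz[OF An y(1)] by blast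
      qed
    qed
  next
    show "G e1 ` B \<subseteq> factor_kind p 0 e1 S"
    proof
      fix x assume x: "x \<in> G e1 ` B"
      then obtain a where a: "a \<in> B" "x = G e1 a" by blast
      obtain rs where rs: "length rs = n" "a = tensor rs" using upb_elem[OF Bn a(1)] by blast
      have "x = tensor (e1#rs)" using a rs G_tensor by simp
      moreover have "length (e1#rs) = p" "(e1#rs)!0 = (\<lambda>t. 1 * e1 t)" using rs pn by simp_all
      moreover have "x \<in> S" using x by (simp add: S_def)
      ultimately show "x \<in> factor_kind p 0 e1 S" unfolding factor_kind_def by blast
    qed
  qed
  have e01: "e0 \<noteq> e1" by (simp add: e0_def e1_def fun_eq_iff)
  have elemS: "\<And>x. x \<in> S \<Longrightarrow> \<exists>v rs. (v = e0 \<or> v = e1) \<and> length rs = n \<and> x = G v (tensor rs) \<and>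
      (v = e0 \<longrightarrow> tensor rs \<in> A) \<and> (v = e1 \<longrightarrow> tensor rs \<in> B)"
  proof -
    fix x assume "x \<in> S"
    then consider a where "a \<in> A" "x = G e0 a" | b where "b \<in> B" "x = G e1 b" unfolding S_def by blast
    then show "\<exists>v rs. (v = e0 \<or> v = e1) \<and> length rs = n \<and> x = G v (tensor rs) \<and>
      (v = e0 \<longrightarrow> tensor rs \<in> A) \<and> (v = e1 \<longrightarrow> tensor rs \<in> B)"
    proof cases
      case 1
      then obtain rs where "length rs = n" "a = tensor rs" using upb_elem[OF An] by blast
      then show ?thesis using 1 e01 by (intro exI[of _ e0] exI[of _ rs]) simp
    next
      case 2
      then obtain rs where "length rs = n" "b = tensor rs" using upb_elem[OF Bn] by blast
      then show ?thesis using 2 e01 by (intro exI[of _ e1] exI[of _ rs]) simp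
    qed
  qed
  have qvv: "\<And>v. v = e0 \<or> v = e1 \<Longrightarrow> qinner v v = 1" using qi00 qi11 by blast
  have finS: "finite S" using finA finB by (simp add: S_def)
  have prodS: "\<forall>x\<in>S. is_product p x \<and> inner_p p x x = 1"
  proof
    fix x assume "x \<in> S"
    then obtain v rs where v: "v = e0 \<or> v = e1" "length rs = n" "x = G v (tensor rs)"
      "v = e0 \<longrightarrow> tensor rs \<in> A" "v = e1 \<longrightarrow> tensor rs \<in> B"
      using elemS by blast
    have nr: "inner_p n (tensor rs) (tensor rs) = 1" using v upb_norm[OF An] upb_norm[OF Bn] by blast
    have "inner_p p x x = 1" unfolding pn v(3) inner_G[OF v(2) v(2)] using nr qvv[OF v(1)] by simp
    moreover have "is_product p x" unfolding is_product_def using v(2,3) pn G_tensor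
      by (intro exI[of _ "v#rs"]) simp
    ultimately show "is_product p x \<and> inner_p p x x = 1" by blast
  qed
  have orthS: "\<forall>x\<in>S. \<forall>y\<in>S. x \<noteq> y \<longrightarrow> inner_p p x y = 0"
  proof (intro ballI impI)
    fix x y assume "x \<in> S" "y \<in> S" "x \<noteq> y"
    obtain v rs where v: "v = e0 \<or> v = e1" "length rs = n" "x = G v (tensor rs)"
      "v = e0 \<longrightarrow> tensor rs \<in> A" "v = e1 \<longrightarrow> tensor rs \<in> B"
      using elemS[OF \<open>x \<in> S\<close>] by blast
    obtain v' rs' where v': "v' = e0 \<or> v' = e1" "length rs' = n" "y = G v' (tensor rs')"
      "v' = e0 \<longrightarrow> tensor rs' \<in> A" "v' = e1 \<longrightarrow> tensor rs' \<in> B"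
      using elemS[OF \<open>y \<in> S\<close>] by blast
    have ip: "inner_p p x y = qinner v v' * inner_p n (tensor rs) (tensor rs')"
      unfolding pn v(3) v'(3) by (rule inner_G[OF v(2) v'(2)])
    show "inner_p p x y = 0"
    proof (cases "v = v'")
      case True
      have ne: "tensor rs \<noteq> tensor rs'"
      proof
        assume eq: "tensor rs = tensor rs'"
        have "x = y" unfolding v(3) v'(3) eq True ..
        then show False using \<open>x \<noteq> y\<close> by simp
      qed
      have oA: "\<forall>x\<in>A. \<forall>y\<in>A. x \<noteq> y \<longrightarrow> inner_p n x y = 0" using An by (simp add: is_UPB_def)
      have oB: "\<forall>x\<in>B. \<forall>y\<in>B. x \<noteq> y \<longrightarrow> inner_p n x y = 0" using Bn by (simp add: is_UPB_def)
      have "inner_p n (tensor rs) (tensor rs') = 0"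
      proof (cases "v = e0")
        case True2: True
        then have "tensor rs \<in> A" "tensor rs' \<in> A" using v(4) v'(4) True by simp_all
        then show ?thesis using oA ne by blast
      next
        case False2: False
        then have "v = e1" using v(1) by simp
        then have "tensor rs \<in> B" "tensor rs' \<in> B" using v(5) v'(5) True by simp_all
        then show ?thesis using oB ne by blast
      qed
      then show ?thesis using ip by simp
    next
      case False
      then have "qinner v v' = 0" using v(1) v'(1) qi01 qi10 by blast
      then show ?thesis using ip by simp
    qed
  qed
  have extS: "\<not> (\<exists>y. is_product p y \<and> y \<noteq> (\<lambda>_. 0) \<and> y \<notin> S \<and> (\<forall>x\<in>S. inner_p p x y = 0))"
  proof
    assume "\<exists>y. is_product p y \<and> y \<noteq> (\<lambda>_. 0) \<and> y \<notin> S \<and> (\<forall>x\<in>S. inner_p p x y = 0)"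
    then obtain zs where zs: "length zs = p" "tensor zs \<noteq> (\<lambda>_. 0)" and zo: "\<forall>x\<in>S. inner_p p x (tensor zs) = 0"
      unfolding is_product_def by blast
    obtain v zs' where vz: "zs = v # zs'" using zs(1) pn by (cases zs) auto
    have lz: "length zs' = n" using zs(1) vz pn by simp
    have z': "tensor zs' \<noteq> (\<lambda>_. 0)"
    proof
      assume h: "tensor zs' = (\<lambda>_. 0)"
      have "tensor zs = (\<lambda>_. 0)"
      proof
        fix bs show "tensor zs bs = 0"
          by (cases bs) (simp_all add: vz tensor_Cons_Nil tensor_Cons_Cons h)
      qed
      then show False using zs(2) by blast
    qed
    have side: "\<And>C e. is_UPB n C \<Longrightarrow> G e ` C \<subseteq> S \<Longrightarrow> qinner e v \<noteq> 0 \<Longrightarrow> False"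
    proof -
      fix C e assume C: "is_UPB n C" and sub: "G e ` C \<subseteq> S" and ev: "qinner e v \<noteq> 0"
      have o: "\<forall>a\<in>C. inner_p n a (tensor zs') = 0"
      proof
        fix a assume a: "a \<in> C"
        obtain rs where rs: "length rs = n" "a = tensor rs" using upb_elem[OF C a] by blast
        have "inner_p p (G e a) (tensor zs) = qinner e v * inner_p n a (tensor zs')"
          unfolding pn vz rs(2) G_tensor[symmetric] by (rule inner_G[OF rs(1) lz])
        moreover have "inner_p p (G e a) (tensor zs) = 0" using zo sub a by blast
        ultimately show "inner_p n a (tensor zs') = 0" using ev by simp
      qed
      have nin: "tensor zs' \<notin> C"
      proof
        assume zc: "tensor zs' \<in> C"
        have "inner_p n (tensor zs') (tensor zs') = 1" by (rule upb_norm[OF C zc])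
        moreover have "inner_p n (tensor zs') (tensor zs') = 0" using o zc by blast
        ultimately show False by simp
      qed
      have "is_product n (tensor zs')" unfolding is_product_def using lz by blast
      then show False using C z' nin o unfolding is_UPB_def by blast
    qed
    have "v False = 0"
    proof (rule ccontr)
      assume h: "v False \<noteq> 0"
      have "G e0 ` A \<subseteq> S" by (simp add: S_def)
      then show False by (rule side[OF An]) (simp add: qi0v h)
    qed
    moreover have "v True = 0"
    proof (rule ccontr)
      assume h: "v True \<noteq> 0"
      have "G e1 ` B \<subseteq> S" by (simp add: S_def)
      then show False by (rule side[OF Bn]) (simp add: qi1v h)
    qed
    ultimately have v0: "\<And>b. v b = 0" by (metis (full_types))
    have "tensor zs = (\<lambda>_. 0)"
    proof
      fix bs show "tensor zs bs = 0"
        by (cases bs) (simp_all add: vz tensor_Cons_Nil tensor_Cons_Cons v0)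
    qed
    then show False using zs(2) by blast
  qed
  have upb: "is_UPB p S" unfolding is_UPB_def using finS prodS orthS extS by blast
  have ob: "orthonormal_basis2 e0 e1" by (simp add: orthonormal_basis2_def qi00 qi11 qi01)
  have "S = factor_kind p 0 e0 S \<union> factor_kind p 0 e1 S" unfolding fk0 fk1 by (simp add: S_def)
  moreover have "card (factor_kind p 0 e0 S) = card A" using fk0 card_image[OF injA] by simp
  moreover have "card (factor_kind p 0 e1 S) = card B" using fk1 card_image[OF injB] by simp
  moreover have "0 < p" using p2 by simp
  ultimately show ?thesis using upb cardS ob by blast
qed


lemma partI:
  assumes "p \<ge> 2" and "is_UPB p S \<and> i < p \<and> orthonormal_basis2 u w \<and>
        S = factor_kind p i u S \<union> factor_kind p i w S \<and>
        card (factor_kind p i u S) = a \<and> card (factor_kind p i w S) = b"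
  shows "is_UPB (p - 1) (delete_factor p i u S) \<and> card (delete_factor p i u S) = a \<and>
          is_UPB (p - 1) (delete_factor p i w S) \<and> card (delete_factor p i w S) = b"
proof -
  have h: "is_UPB p S \<and> i < p \<and> orthonormal_basis2 u w \<and>
        S = factor_kind p i u S \<union> factor_kind p i w S \<and>
        card (factor_kind p i u S) = a \<and> card (factor_kind p i w S) = b" by (rule assms(2))
  have ob: "orthonormal_basis2 u w" using h by blast
  have hU: "is_UPB p S" and hi: "i < p" using h by blast+
  have obw: "orthonormal_basis2 w u"
  proof -
    have "qinner w u = cnj (qinner u w)" by (rule qinner_conj)
    also have "\<dots> = 0" using ob by (simp add: orthonormal_basis2_def)
    finally show ?thesis using ob by (simp add: orthonormal_basis2_def)
  qed
  have S1: "S = factor_kind p i u S \<union> factor_kind p i w S" using h by blast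
  then have S2: "S = factor_kind p i w S \<union> factor_kind p i u S" by blast
  have r1: "is_UPB (p-1) (delete_factor p i u S) \<and> card (delete_factor p i u S) = card (factor_kind p i u S)"
    using side[OF hU hi assms(1) ob S1] .
  have r2: "is_UPB (p-1) (delete_factor p i w S) \<and> card (delete_factor p i w S) = card (factor_kind p i w S)"
    using side[OF hU hi assms(1) obw S2] .
  show ?thesis
    using r1 r2 h by simp
qed

lemma partII:
  assumes "p \<ge> 2" "is_UPB (p - 1) A" "card A = a" "is_UPB (p - 1) B" "card B = b"
  shows "\<exists>S i u w. is_UPB p S \<and> card S = a + b \<and> i < p \<and> orthonormal_basis2 u w \<and>
            S = factor_kind p i u S \<union> factor_kind p i w S \<and>
            card (factor_kind p i u S) = a \<and> card (factor_kind p i w S) = b"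
  using part2[OF assms(2) assms(4) assms(1)] assms(3,5) by simp

theorem lemmaA1:
  fixes p a b :: nat
  assumes "p \<ge> 2" and "a > 0" and "b > 0"
  shows
   "(\<forall>S i u w. is_UPB p S \<and> i < p \<and> orthonormal_basis2 u w \<and>
        S = factor_kind p i u S \<union> factor_kind p i w S \<and>
        card (factor_kind p i u S) = a \<and> card (factor_kind p i w S) = b
      \<longrightarrow> is_UPB (p - 1) (delete_factor p i u S) \<and> card (delete_factor p i u S) = a \<and>
          is_UPB (p - 1) (delete_factor p i w S) \<and> card (delete_factor p i w S) = b)
    \<and>
    ((\<exists>A B. is_UPB (p - 1) A \<and> card A = a \<and> is_UPB (p - 1) B \<and> card B = b)
      \<longrightarrow> (\<exists>S i u w. is_UPB p S \<and> card S = a + b \<and> i < p \<and> orthonormal_basis2 u w \<and>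
            S = factor_kind p i u S \<union> factor_kind p i w S \<and>
            card (factor_kind p i u S) = a \<and> card (factor_kind p i w S) = b))"
proof (rule conjI)
  show "\<forall>S i u w. is_UPB p S \<and> i < p \<and> orthonormal_basis2 u w \<and>
        S = factor_kind p i u S \<union> factor_kind p i w S \<and>
        card (factor_kind p i u S) = a \<and> card (factor_kind p i w S) = b
      \<longrightarrow> is_UPB (p - 1) (delete_factor p i u S) \<and> card (delete_factor p i u S) = a \<and>
          is_UPB (p - 1) (delete_factor p i w S) \<and> card (delete_factor p i w S) = b"
    using partI[OF assms(1)] by blast
  show "(\<exists>A B. is_UPB (p - 1) A \<and> card A = a \<and> is_UPB (p - 1) B \<and> card B = b)
      \<longrightarrow> (\<exists>S i u w. is_UPB p S \<and> card S = a + b \<and> i < p \<and> orthonormal_basis2 u w \<and>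
            S = factor_kind p i u S \<union> factor_kind p i w S \<and>
            card (factor_kind p i u S) = a \<and> card (factor_kind p i w S) = b)"
    using partII[OF assms(1)] by blast
qed

end
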